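(* Let $(\mathbf d_n)$ be a family of degree sequences and $(k_n)$ positive integers with $k_n\le n$ and $k_n=o\big((n^2/m_2)^{2/3}\big)$ as $n\to\infty$. With $k=k_n$, $\alpha=k/n$ and $\lambda=\sum_{j=1}^n\frac{\alpha d_j}{\alpha d_j+1}$, \[g_n(k)=(1-\alpha)^{n-k}\Big(\prod_{j=1}^n(\alpha d_j+1)\Big)e^{k-\lambda}\Big(\frac{\lambda}{k}\Big)^k\Big(1+O\Big(\frac{k^{3/2}m_2}{n^2}\Big)\Big).\]
   Context: A degree sequence is $\mathbf d_n=(d_1,\ldots,d_n)\in\mathbb N_0^n$ with $\sum_j d_j=n$ (dependence on $n$ suppressed); $m_j=\sum_i d_i^j$. $\langle n\rangle_k=n!/(n-k)!$ and $g_n(k)=\frac{k!}{\langle n\rangle_k}\sum_{1\le i_1<\cdots<i_k\le n}\prod_{j=1}^k d_{i_j}$. Asymptotics are as $n\to\infty$. *)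

theory Defs
  imports "HOL-Analysis.Analysis" "HOL-Library.Landau_Symbols"
begin

definition is_degree_seq :: "nat \<Rightarrow> (nat \<Rightarrow> nat) \<Rightarrow> bool" where
  "is_degree_seq n d \<longleftrightarrow> (\<Sum>j=1..n. d j) = n"

definition moment :: "nat \<Rightarrow> (nat \<Rightarrow> nat) \<Rightarrow> nat \<Rightarrow> real" where
  "moment n d p = (\<Sum>i=1..n. real (d i) ^ p)"

definition falling :: "nat \<Rightarrow> nat \<Rightarrow> real" where
  "falling n k = fact n / fact (n - k)"

definition gfun :: "nat \<Rightarrow> (nat \<Rightarrow> nat) \<Rightarrow> nat \<Rightarrow> real" where
  "gfun n d k = fact k / falling n k *
     (\<Sum>S\<in>{S. S \<subseteq> {1..n} \<and> card S = k}. \<Prod>j\<in>S. real (d j))"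

end

theory Submission
  imports Defs
begin

lemma mono0_deriv:
  fixes f f' :: "real \<Rightarrow> real"
  assumes "0 \<le> u" "\<And>x. 0 \<le> x \<Longrightarrow> (f has_real_derivative f' x) (at x)" "\<And>x. 0 \<le> x \<Longrightarrow> 0 \<le> f' x"
  shows "f 0 \<le> f u"
  using assms by (intro DERIV_nonneg_imp_nondecreasing[OF assms(1)]) blast

lemma cos_bounds_nonneg: fixes x :: real assumes "0 \<le> x"
  shows "cos x \<le> 1 - x^2/2 + x^4/24" "1 - x^2/2 \<le> cos x"
proof -
  have s1: "sin u \<le> u" if "0 \<le> u" for u::real using sin_x_le_x that by auto
  have c2: "1 - u^2/2 \<le> cos u" if "0 \<le> u" for u::real
  proof -
    have "(\<lambda>x. cos x - 1 + x^2/2) 0 \<le> (\<lambda>x. cos x - 1 + x^2/2) u"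
      by (rule mono0_deriv[where f'="\<lambda>x. - sin x + x"]) (use that s1 in \<open>auto intro!: derivative_eq_intros\<close>)
    thus ?thesis by simp
  qed
  have s3: "u - u^3/6 \<le> sin u" if "0 \<le> u" for u::real
  proof -
    have "(\<lambda>x. sin x - x + x^3/6) 0 \<le> (\<lambda>x. sin x - x + x^3/6) u"
      by (rule mono0_deriv[where f'="\<lambda>x. cos x - 1 + x^2/2"]) (use that c2 in \<open>auto intro!: derivative_eq_intros simp: field_simps\<close>)
    thus ?thesis by simp
  qed
  have c4: "cos u \<le> 1 - u^2/2 + u^4/24" if "0 \<le> u" for u::real
  proof -
    have "(\<lambda>x. 1 - x^2/2 + x^4/24 - cos x) 0 \<le> (\<lambda>x. 1 - x^2/2 + x^4/24 - cos x) u"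
      by (rule mono0_deriv[where f'="\<lambda>x. - x + x^3/6 + sin x"]) (use that s3 in \<open>auto intro!: derivative_eq_intros simp: field_simps\<close>)
    thus ?thesis by simp
  qed
  show "cos x \<le> 1 - x^2/2 + x^4/24" "1 - x^2/2 \<le> cos x" using c2 c4 assms by auto
qed

lemma cos_bounds:
  fixes x :: real assumes "\<bar>x\<bar> \<le> pi"
  shows "x^2/12 \<le> 1 - cos x" "1 - cos x \<le> x^2/2"
proof -
  have "\<bar>x\<bar>^2 \<le> pi^2" using assms by (intro power_mono) auto
  also have "pi^2 \<le> 10"
  proof -
    have p: "pi \<le> 3.15" using pi_approx(2) by (simp add: divide_simps)
    have "pi * pi \<le> 3.15 * 3.15" by (rule mult_mono[OF p p]) (use pi_gt_zero in auto)
    thus ?thesis by (simp add: power2_eq_square)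
  qed
  finally have xx: "x^2 \<le> 10" by simp
  have "x^4 = x^2 * x^2" by (simp flip: power_add)
  moreover have "x^2 * x^2 \<le> 10 * x^2" by (rule mult_right_mono[OF xx]) simp
  ultimately have "x^4 \<le> 10 * x^2" by linarith
  moreover have "cos x \<le> 1 - x^2/2 + x^4/24" using cos_bounds_nonneg(1)[of "\<bar>x\<bar>"] by simp
  ultimately show "x^2/12 \<le> 1 - cos x" by linarith
  show "1 - cos x \<le> x^2/2" using cos_bounds_nonneg(2)[of "\<bar>x\<bar>"] by simp
qed

lemma F_deriv:
  fixes b :: real assumes b: "b > 0"
  shows "((\<lambda>t. (arctan (sqrt b * t) / sqrt b - t / (1 + b * t^2)) / (2*b)) has_real_derivative
          t^2 / (1 + b*t^2)^2) (at t)"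
proof -
  have pos: "1 + b * t^2 > 0" using b by (simp add: add_pos_nonneg)
  have d1: "((\<lambda>t. arctan (sqrt b * t)) has_real_derivative inverse (1 + (sqrt b * t)^2) * sqrt b) (at t)"
    by (rule DERIV_chain'[OF DERIV_cmult_Id DERIV_arctan])
  have d2: "((\<lambda>t. 1 + b * t^2) has_real_derivative b * (2 * t)) (at t)"
    by (auto intro!: derivative_eq_intros)
  have d3: "((\<lambda>t. t / (1 + b * t^2)) has_real_derivative (1 * (1 + b*t^2) - (b * (2 * t)) * t) / ((1 + b*t^2) ^ Suc (Suc 0))) (at t)"
    by (rule DERIV_quotient[OF DERIV_ident d2]) (use pos in simp)
  note d4 = DERIV_cdivide[OF DERIV_diff[OF DERIV_cdivide[OF d1, of "sqrt b"] d3], of "2*b"]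
  have e1: "(sqrt b * t)^2 = b * t^2" using b by (simp add: power_mult_distrib)
  have "sqrt b > 0" using b by simp
  hence e2: "inverse (1 + (sqrt b * t)^2) * sqrt b / sqrt b = inverse (1 + b*t^2)" using e1 by simp
  have e3: "(inverse (1 + (sqrt b * t)^2) * sqrt b / sqrt b - (1 * (1 + b*t^2) - (b * (2 * t)) * t) / ((1 + b*t^2) ^ Suc (Suc 0))) / (2*b)
     = t^2 / (1 + b*t^2)^2"
  proof -
    have key: "\<And>D::real. D > 0 \<Longrightarrow> (inverse D - (1*D - (b*(2*t))*t)/(D^Suc(Suc 0)))/(2*b) = t^2/D^2"
      using b by (simp add: field_simps power2_eq_square)
    show ?thesis unfolding e2 by (rule key[OF pos])
  qed
  show ?thesis using d4 unfolding e3 .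
qed

lemma rat_integral:
  fixes b :: real assumes b: "b > 0"
  shows "((\<lambda>t. t^2 / (1 + b*t^2)^2) has_integral
     ((arctan (sqrt b * pi) / sqrt b - pi / (1 + b * pi^2)) / b)) {-pi..pi}"
proof -
  let ?F = "\<lambda>t. (arctan (sqrt b * t) / sqrt b - t / (1 + b * t^2)) / (2*b)"
  have "((\<lambda>t. t^2 / (1 + b*t^2)^2) has_integral (?F pi - ?F (-pi))) {-pi..pi}"
    apply (rule fundamental_theorem_of_calculus)
    using pi_gt_zero apply simp
    apply (intro ballI has_field_derivative_at_within[THEN has_real_derivative_iff_has_vector_derivative[THEN iffD1]])
    by (rule F_deriv[OF b])
  moreover have "?F pi - ?F (-pi) = (arctan (sqrt b * pi) / sqrt b - pi / (1 + b * pi^2)) / b"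
    using b by (simp add: arctan_minus field_simps)
  ultimately show ?thesis by simp
qed

lemma rat_integral_bound:
  fixes b :: real assumes b: "b > 0"
  shows "(arctan (sqrt b * pi) / sqrt b - pi / (1 + b * pi^2)) / b \<le> pi / (2 * b * sqrt b)"
proof -
  have "arctan (sqrt b * pi) \<le> pi/2" using arctan_ubound[of "sqrt b * pi"] by simp
  moreover have "pi / (1 + b * pi^2) \<ge> 0" using b by (simp add: add_pos_nonneg)
  ultimately have "arctan (sqrt b * pi) / sqrt b - pi / (1 + b * pi^2) \<le> (pi/2) / sqrt b"
    using b by (smt (verit) divide_right_mono real_sqrt_ge_zero)
  hence "(arctan (sqrt b * pi) / sqrt b - pi / (1 + b * pi^2)) / b \<le> ((pi/2) / sqrt b) / b"
    using b by (intro divide_right_mono) auto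
  thus ?thesis by (simp add: ac_simps)
qed

lemma exp_neg_le_rat: fixes y :: real assumes "0 \<le> y" shows "exp (-y) \<le> 1 / (1 + y/2)^2"
proof -
  have "1 + y/2 \<le> exp (y/2)" by (rule exp_ge_add_one_self)
  hence "(1 + y/2)^2 \<le> exp (y/2)^2" using assms by (intro power_mono) auto
  also have "exp (y/2)^2 = exp y" by (simp add: power2_eq_square flip: exp_add)
  finally have "(1+y/2)^2 \<le> exp y" .
  moreover have "0 < (1+y/2)^2" using assms by simp
  ultimately show ?thesis by (simp add: exp_minus field_simps)
qed

lemma pointwise_bound:
  fixes \<mu> t :: real assumes mu: "\<mu> > 0" and t: "\<bar>t\<bar> \<le> pi"
  shows "(1 - cos t) * exp (- \<mu> * (1 - cos t)) \<le> (1/2) * (t^2 / (1 + (\<mu>/24) * t^2)^2)"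
proof -
  note cb = cos_bounds[OF t]
  have x0: "0 \<le> 1 - cos t" by simp
  have "exp (- \<mu> * (1 - cos t)) \<le> 1 / (1 + \<mu> * (1 - cos t)/2)^2"
    using exp_neg_le_rat[of "\<mu> * (1 - cos t)"] mu x0 by simp
  also have "\<dots> \<le> 1 / (1 + (\<mu>/24) * t^2)^2"
  proof -
    have "(\<mu>/2) * (t^2/12) \<le> (\<mu>/2) * (1 - cos t)" using cb(1) mu by (intro mult_left_mono) auto
    hence "(\<mu>/24) * t^2 \<le> \<mu> * (1 - cos t)/2" by simp
    hence "1 + (\<mu>/24) * t^2 \<le> 1 + \<mu> * (1 - cos t)/2" by simp
    moreover have "0 < 1 + (\<mu>/24) * t^2" using mu by (simp add: add_pos_nonneg)
    ultimately have "(1 + (\<mu>/24) * t^2)^2 \<le> (1 + \<mu> * (1 - cos t)/2)^2" by (intro power_mono) auto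
    thus ?thesis using \<open>0 < 1 + (\<mu>/24) * t^2\<close> by (intro divide_left_mono mult_pos_pos) auto
  qed
  finally have e: "exp (- \<mu> * (1 - cos t)) \<le> 1 / (1 + (\<mu>/24) * t^2)^2" .
  have "(1 - cos t) * exp (- \<mu> * (1 - cos t)) \<le> (t^2/2) * (1 / (1 + (\<mu>/24) * t^2)^2)"
    by (rule mult_mono[OF cb(2) e]) auto
  thus ?thesis by simp
qed

lemma integral_cos_bound:
  fixes \<mu> :: real assumes mu: "\<mu> > 0"
  shows "(\<lambda>t. (1 - cos t) * exp (- \<mu> * (1 - cos t))) integrable_on {-pi..pi}"
    "integral {-pi..pi} (\<lambda>t. (1 - cos t) * exp (- \<mu> * (1 - cos t))) \<le> 30 * pi / (\<mu> * sqrt \<mu>)"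
proof -
  show int1: "(\<lambda>t. (1 - cos t) * exp (- \<mu> * (1 - cos t))) integrable_on {-pi..pi}"
    by (intro integrable_continuous_interval continuous_intros)
  define b where "b = \<mu>/24"
  have b: "b > 0" using mu by (simp add: b_def)
  note ri = has_integral_mult_right[OF rat_integral[OF b], of "1/2"]
  have "integral {-pi..pi} (\<lambda>t. (1 - cos t) * exp (- \<mu> * (1 - cos t)))
        \<le> integral {-pi..pi} (\<lambda>t. (1/2) * (t^2 / (1 + b * t^2)^2))"
    using int1 ri pointwise_bound[OF mu] unfolding b_def
    by (intro integral_le) (auto simp: abs_le_iff)
  also have "\<dots> = (1/2) * ((arctan (sqrt b * pi) / sqrt b - pi / (1 + b * pi^2)) / b)"
    using ri by (rule integral_unique)
  also have "\<dots> \<le> (1/2) * (pi / (2 * b * sqrt b))"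
    using rat_integral_bound[OF b] by (rule mult_left_mono) simp
  also have "\<dots> = 6 * sqrt 24 * pi / (\<mu> * sqrt \<mu>)"
    using mu by (simp add: b_def real_sqrt_divide field_simps)
  also have "\<dots> \<le> 30 * pi / (\<mu> * sqrt \<mu>)"
  proof -
    have "sqrt 24 \<le> 5" by (rule real_le_lsqrt) auto
    thus ?thesis using mu by (intro divide_right_mono) auto
  qed
  finally show "integral {-pi..pi} (\<lambda>t. (1 - cos t) * exp (- \<mu> * (1 - cos t))) \<le> 30 * pi / (\<mu> * sqrt \<mu>)" .
qed

lemma exp_int_integral:
  fixes m :: int
  shows "((\<lambda>t::real. exp (\<i> * of_int m * of_real t)) has_integral (if m = 0 then of_real (2*pi) else 0)) {-pi..pi}"
proof (cases "m = 0")
  case True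
  have "((\<lambda>t::real. (1::complex)) has_integral ((pi - (-pi)) *\<^sub>R 1)) {-pi..pi}"
    using has_integral_const_real[of "1::complex" "-pi" pi] pi_gt_zero by simp
  thus ?thesis using True by (simp add: scaleR_conv_of_real)
next
  case False
  let ?G = "\<lambda>z::complex. exp (\<i> * of_int m * z) / (\<i> * of_int m)"
  have der: "(?G has_field_derivative exp (\<i> * of_int m * z)) (at z)" for z
  proof -
    have "(?G has_field_derivative (exp (\<i> * of_int m * z) * (\<i> * of_int m)) / (\<i> * of_int m)) (at z)"
      by (auto intro!: derivative_eq_intros)
    thus ?thesis using False by simp
  qed
  have "((\<lambda>t::real. exp (\<i> * of_int m * of_real t)) has_integral (?G (of_real pi) - ?G (of_real (-pi)))) {-pi..pi}"
    apply (rule fundamental_theorem_of_calculus)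
    using pi_gt_zero apply simp
    using has_vector_derivative_real_field[OF der] by blast
  moreover have "?G (of_real pi) = ?G (of_real (-pi))"
  proof -
    have "exp (\<i> * of_int m * of_real (-pi)) * exp ((2 * of_int m * pi) * \<i>) = exp (\<i> * of_int m * of_real (-pi) + (2 * of_int m * pi) * \<i>)"
      by (rule exp_add[symmetric])
    also have "\<i> * of_int m * of_real (-pi) + (2 * of_int m * pi) * \<i> = \<i> * of_int m * of_real pi"
      by (simp add: algebra_simps)
    finally have "exp (\<i> * of_int m * of_real pi) = exp (\<i> * of_int m * of_real (-pi)) * exp ((2 * of_int m * pi) * \<i>)" by simp
    also have "exp ((2 * of_int m * pi) * \<i>) = 1" by (rule exp_integer_2pi) simp
    finally show ?thesis by simp
  qed
  ultimately show ?thesis using False by simp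
qed

definition Qd :: "nat set \<Rightarrow> (nat \<Rightarrow> real) \<Rightarrow> nat \<Rightarrow> real" where
  "Qd I p k = (\<Sum>T\<in>{T. T \<subseteq> I \<and> card T = k}. (\<Prod>j\<in>T. p j) * (\<Prod>j\<in>I-T. 1 - p j))"

definition phi :: "nat set \<Rightarrow> (nat \<Rightarrow> real) \<Rightarrow> real \<Rightarrow> complex" where
  "phi I p t = (\<Prod>j\<in>I. complex_of_real (1 - p j) + complex_of_real (p j) * exp (\<i> * complex_of_real t))"

lemma phi_expand:
  assumes "finite I"
  shows "phi I p t = (\<Sum>T\<in>Pow I. complex_of_real ((\<Prod>j\<in>T. p j) * (\<Prod>j\<in>I-T. 1 - p j)) * exp (\<i> * of_nat (card T) * of_real t))"
proof -
  have "phi I p t = (\<Prod>j\<in>I. complex_of_real (p j) * exp (\<i> * complex_of_real t) + complex_of_real (1 - p j))"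
    unfolding phi_def by (simp add: add.commute)
  also have "\<dots> = (\<Sum>X\<in>Pow I. (\<Prod>j\<in>X. complex_of_real (p j) * exp (\<i> * complex_of_real t)) * (\<Prod>j\<in>I-X. complex_of_real (1 - p j)))"
    by (rule prod_add[OF assms])
  also have "\<dots> = (\<Sum>T\<in>Pow I. complex_of_real ((\<Prod>j\<in>T. p j) * (\<Prod>j\<in>I-T. 1 - p j)) * exp (\<i> * of_nat (card T) * of_real t))"
  proof (rule sum.cong[OF refl])
    fix X assume "X \<in> Pow I"
    have "(\<Prod>j\<in>X. complex_of_real (p j) * exp (\<i> * complex_of_real t)) = of_real (\<Prod>j\<in>X. p j) * exp (\<i> * complex_of_real t) ^ card X"
      by (simp add: prod.distrib)
    also have "exp (\<i> * complex_of_real t) ^ card X = exp (of_nat (card X) * (\<i> * complex_of_real t))"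
      by (rule exp_of_nat_mult[symmetric])
    finally show "(\<Prod>j\<in>X. complex_of_real (p j) * exp (\<i> * complex_of_real t)) * (\<Prod>j\<in>I-X. complex_of_real (1 - p j)) =
       complex_of_real ((\<Prod>j\<in>X. p j) * (\<Prod>j\<in>I-X. 1 - p j)) * exp (\<i> * of_nat (card X) * of_real t)"
      by (simp add: algebra_simps)
  qed
  finally show ?thesis .
qed

lemma fourier_Q:
  assumes "finite I"
  shows "((\<lambda>t. phi I p t * exp (- \<i> * of_nat k * of_real t)) has_integral complex_of_real (2 * pi * Qd I p k)) {-pi..pi}"
proof -
  define c where "c T = (\<Prod>j\<in>T. p j) * (\<Prod>j\<in>I-T. 1 - p j)" for T
  have eq: "phi I p t * exp (- \<i> * of_nat k * of_real t) =
     (\<Sum>T\<in>Pow I. complex_of_real (c T) * exp (\<i> * of_int (int (card T) - int k) * of_real t))" for t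
  proof -
    have "phi I p t * exp (- \<i> * of_nat k * of_real t) =
       (\<Sum>T\<in>Pow I. complex_of_real (c T) * (exp (\<i> * of_nat (card T) * of_real t) * exp (- \<i> * of_nat k * of_real t)))"
      unfolding phi_expand[OF assms] c_def by (simp add: sum_distrib_right mult.assoc)
    also have "\<dots> = (\<Sum>T\<in>Pow I. complex_of_real (c T) * exp (\<i> * of_int (int (card T) - int k) * of_real t))"
    proof (rule sum.cong[OF refl])
      fix T :: "nat set"
      have "exp (\<i> * of_nat (card T) * of_real t) * exp (- \<i> * of_nat k * of_real t) =
            exp (\<i> * of_nat (card T) * of_real t + - \<i> * of_nat k * of_real t)" by (rule exp_add[symmetric])
      also have "\<i> * of_nat (card T) * of_real t + - \<i> * of_nat k * of_real t = \<i> * of_int (int (card T) - int k) * of_real t"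
        by (simp add: algebra_simps)
      finally show "complex_of_real (c T) * (exp (\<i> * of_nat (card T) * of_real t) * exp (- \<i> * of_nat k * of_real t)) =
         complex_of_real (c T) * exp (\<i> * of_int (int (card T) - int k) * of_real t)" by simp
    qed
    finally show ?thesis .
  qed
  have "((\<lambda>t. \<Sum>T\<in>Pow I. complex_of_real (c T) * exp (\<i> * of_int (int (card T) - int k) * of_real t)) has_integral
        (\<Sum>T\<in>Pow I. complex_of_real (c T) * (if int (card T) - int k = 0 then of_real (2*pi) else 0))) {-pi..pi}"
    using assms by (intro has_integral_sum has_integral_mult_right exp_int_integral) auto
  moreover have "(\<Sum>T\<in>Pow I. complex_of_real (c T) * (if int (card T) - int k = 0 then of_real (2*pi) else 0))
     = complex_of_real (2 * pi * Qd I p k)"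
  proof -
    have "(\<Sum>T\<in>Pow I. complex_of_real (c T) * (if int (card T) - int k = 0 then of_real (2*pi) else 0))
        = (\<Sum>T\<in>Pow I. if card T = k then complex_of_real (2*pi * c T) else 0)"
      by (intro sum.cong) auto
    also have "\<dots> = (\<Sum>T\<in>{T\<in>Pow I. card T = k}. complex_of_real (2*pi * c T))"
      by (rule sum.inter_filter[symmetric]) (use assms in simp)
    also have "{T\<in>Pow I. card T = k} = {T. T \<subseteq> I \<and> card T = k}" by auto
    finally show ?thesis unfolding Qd_def c_def by (simp add: sum_distrib_left)
  qed
  ultimately show ?thesis unfolding eq by simp
qed

lemma exp_tail_bound:
  fixes z :: complex
  shows "norm (exp z - (\<Sum>r<N. z^r /\<^sub>R fact r)) \<le> exp (norm z) - (\<Sum>r<N. norm z ^ r / fact r)"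
proof -
  have s: "summable (\<lambda>n. z^n /\<^sub>R fact n)" by (rule summable_exp_generic)
  have sn: "summable (\<lambda>n. norm (z^n /\<^sub>R fact n))" by (rule summable_norm_exp)
  have nn: "norm (z^n /\<^sub>R fact n) = norm z ^ n / fact n" for n by (simp add: norm_power field_simps)
  have e1: "exp z - (\<Sum>r<N. z^r /\<^sub>R fact r) = (\<Sum>n. z^(n+N) /\<^sub>R fact (n+N))"
    using suminf_split_initial_segment[OF s, of N] by (simp add: exp_def)
  have sr: "summable (\<lambda>n. norm z ^ n / fact n)" using sn unfolding nn .
  have e2: "exp (norm z) - (\<Sum>r<N. norm z ^ r / fact r) = (\<Sum>n. norm z ^ (n+N) / fact (n+N))"
    using suminf_split_initial_segment[OF sr, of N] by (simp add: exp_def divide_inverse mult.commute)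
  have "norm (\<Sum>n. z^(n+N) /\<^sub>R fact (n+N)) \<le> (\<Sum>n. norm (z^(n+N) /\<^sub>R fact (n+N)))"
    by (rule summable_norm) (rule summable_ignore_initial_segment[OF sn])
  also have "\<dots> = (\<Sum>n. norm z ^ (n+N) / fact (n+N))" unfolding nn ..
  finally show ?thesis unfolding e1 e2 .
qed

lemma exp_tail_tendsto:
  fixes x :: real
  shows "(\<lambda>N. exp x - (\<Sum>r<N. x ^ r / fact r)) \<longlonglongrightarrow> 0"
proof -
  have "(\<lambda>N. \<Sum>r<N. x ^ r /\<^sub>R fact r) \<longlonglongrightarrow> exp x" using exp_converges[of x] by (simp add: sums_def)
  hence "(\<lambda>N. \<Sum>r<N. x ^ r / fact r) \<longlonglongrightarrow> exp x" by (simp add: divide_inverse mult.commute)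
  hence "(\<lambda>N. exp x - (\<Sum>r<N. x ^ r / fact r)) \<longlonglongrightarrow> exp x - exp x" by (intro tendsto_intros)
  thus ?thesis by simp
qed

lemma poly_part_integral:
  fixes lam :: real assumes "k < N"
  shows "((\<lambda>t. (\<Sum>r<N. (complex_of_real lam * exp (\<i> * of_real t))^r /\<^sub>R fact r) * exp (- \<i> * of_nat k * of_real t))
     has_integral complex_of_real (2 * pi * (lam^k / fact k))) {-pi..pi}"
proof -
  have eq: "(\<Sum>r<N. (complex_of_real lam * exp (\<i> * of_real t))^r /\<^sub>R fact r) * exp (- \<i> * of_nat k * of_real t)
     = (\<Sum>r<N. complex_of_real (lam^r / fact r) * exp (\<i> * of_int (int r - int k) * of_real t))" for t
  proof -
    have "(\<Sum>r<N. (complex_of_real lam * exp (\<i> * of_real t))^r /\<^sub>R fact r) * exp (- \<i> * of_nat k * of_real t)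
       = (\<Sum>r<N. complex_of_real (lam^r / fact r) * (exp (\<i> * of_real t) ^ r * exp (- \<i> * of_nat k * of_real t)))"
      unfolding sum_distrib_right
    proof (rule sum.cong[OF refl])
      fix r :: nat
      show "(complex_of_real lam * exp (\<i> * of_real t))^r /\<^sub>R fact r * exp (- \<i> * of_nat k * of_real t)
         = complex_of_real (lam^r / fact r) * (exp (\<i> * of_real t) ^ r * exp (- \<i> * of_nat k * of_real t))"
        by (simp add: scaleR_conv_of_real power_mult_distrib divide_inverse mult_ac)
    qed
    also have "\<dots> = (\<Sum>r<N. complex_of_real (lam^r / fact r) * exp (\<i> * of_int (int r - int k) * of_real t))"
    proof (rule sum.cong[OF refl])
      fix r :: nat
      have "exp (\<i> * of_real t) ^ r * exp (- \<i> * of_nat k * of_real t) =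
            exp (of_nat r * (\<i> * of_real t)) * exp (- \<i> * of_nat k * of_real t)" by (simp add: exp_of_nat_mult)
      also have "\<dots> = exp (of_nat r * (\<i> * of_real t) + - \<i> * of_nat k * of_real t)" by (rule exp_add[symmetric])
      also have "of_nat r * (\<i> * of_real t) + - \<i> * of_nat k * of_real t = \<i> * of_int (int r - int k) * of_real t"
        by (simp add: algebra_simps)
      finally show "complex_of_real (lam^r / fact r) * (exp (\<i> * of_real t) ^ r * exp (- \<i> * of_nat k * of_real t)) =
         complex_of_real (lam^r / fact r) * exp (\<i> * of_int (int r - int k) * of_real t)" by simp
    qed
    finally show ?thesis .
  qed
  have "((\<lambda>t. \<Sum>r<N. complex_of_real (lam^r / fact r) * exp (\<i> * of_int (int r - int k) * of_real t)) has_integral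
       (\<Sum>r<N. complex_of_real (lam^r / fact r) * (if int r - int k = 0 then of_real (2*pi) else 0))) {-pi..pi}"
    by (intro has_integral_sum has_integral_mult_right exp_int_integral) auto
  moreover have "(\<Sum>r<N. complex_of_real (lam^r / fact r) * (if int r - int k = 0 then of_real (2*pi) else 0))
      = (\<Sum>r<N. if r = k then complex_of_real (2 * pi * (lam^k / fact k)) else 0)"
    by (intro sum.cong) auto
  moreover have "\<dots> = complex_of_real (2 * pi * (lam^k / fact k))" using assms by (simp add: sum.delta)
  ultimately show ?thesis unfolding eq by simp
qed

lemma fourier_exp:
  fixes lam :: real assumes lam: "lam \<ge> 0"
  shows "((\<lambda>t. exp (complex_of_real lam * exp (\<i> * of_real t)) * exp (- \<i> * of_nat k * of_real t))
     has_integral complex_of_real (2 * pi * (lam^k / fact k))) {-pi..pi}"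
proof -
  let ?f = "\<lambda>t. exp (complex_of_real lam * exp (\<i> * of_real t)) * exp (- \<i> * of_nat k * of_real t)"
  let ?P = "\<lambda>N t. (\<Sum>r<N. (complex_of_real lam * exp (\<i> * of_real t))^r /\<^sub>R fact r) * exp (- \<i> * of_nat k * of_real t)"
  let ?c = "complex_of_real (2 * pi * (lam^k / fact k))"
  let ?tail = "\<lambda>N. exp lam - (\<Sum>r<N. lam ^ r / fact r)"
  have fc: "continuous_on {-pi..pi} ?f" by (intro continuous_intros)
  hence fi: "?f integrable_on {-pi..pi}" by (rule integrable_continuous_interval)
  have bound: "norm (integral {-pi..pi} ?f - ?c) \<le> 2 * pi * ?tail N" if N: "k < N" for N
  proof -
    have Pi: "(?P N has_integral ?c) {-pi..pi}" by (rule poly_part_integral[OF N])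
    have A: "integral {-pi..pi} (\<lambda>t. ?f t - ?P N t) = integral {-pi..pi} ?f - ?c"
      using integral_diff[OF fi has_integral_integrable[OF Pi]] integral_unique[OF Pi] by simp
    have B: "norm (integral {-pi..pi} (\<lambda>t. ?f t - ?P N t)) \<le> ?tail N * (pi - -pi)"
    proof (rule integral_bound)
      show "-pi \<le> pi" using pi_gt_zero by simp
      show "continuous_on {-pi..pi} (\<lambda>t. ?f t - ?P N t)" by (intro continuous_intros)
      fix t :: real
      have nz: "norm (complex_of_real lam * exp (\<i> * of_real t)) = lam" using lam by (simp add: norm_mult)
      have "?f t - ?P N t = (exp (complex_of_real lam * exp (\<i> * of_real t)) - (\<Sum>r<N. (complex_of_real lam * exp (\<i> * of_real t))^r /\<^sub>R fact r)) * exp (- \<i> * of_nat k * of_real t)"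
        by (simp add: algebra_simps)
      moreover have "norm (exp (- \<i> * of_nat k * of_real t)) = 1"
      proof -
        have "- \<i> * of_nat k * of_real t = \<i> * complex_of_real (- (real k * t))" by simp
        thus ?thesis by (simp only: norm_exp_i_times)
      qed
      ultimately have "norm (?f t - ?P N t) = norm (exp (complex_of_real lam * exp (\<i> * of_real t)) - (\<Sum>r<N. (complex_of_real lam * exp (\<i> * of_real t))^r /\<^sub>R fact r))"
        by (simp add: norm_mult)
      also have "\<dots> \<le> ?tail N" using exp_tail_bound[of "complex_of_real lam * exp (\<i> * of_real t)" N] unfolding nz .
      finally show "norm (?f t - ?P N t) \<le> ?tail N" .
    qed
    have C: "?tail N * (pi - -pi) = 2 * pi * ?tail N" by simp
    show ?thesis using B unfolding A C .
  qed
  have lim: "(\<lambda>N. 2 * pi * ?tail N) \<longlonglongrightarrow> 0"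
    using tendsto_mult[OF tendsto_const exp_tail_tendsto, of "2*pi" lam] by simp
  have "norm (integral {-pi..pi} ?f - ?c) \<le> 0"
  proof (rule LIMSEQ_le_const[OF lim])
    show "\<exists>N. \<forall>n\<ge>N. norm (integral {-pi..pi} ?f - ?c) \<le> 2 * pi * ?tail n"
      using bound by (intro exI[of _ "Suc k"]) auto
  qed
  hence "integral {-pi..pi} ?f = ?c" by simp
  thus ?thesis using fi by (metis has_integral_integral)
qed

lemma fourier_pois:
  fixes lam :: real assumes lam: "lam \<ge> 0"
  shows "((\<lambda>t. exp (complex_of_real lam * (exp (\<i> * of_real t) - 1)) * exp (- \<i> * of_nat k * of_real t))
     has_integral complex_of_real (2 * pi * (exp (- lam) * lam^k / fact k))) {-pi..pi}"
proof -
  have e: "exp (complex_of_real lam * (exp (\<i> * of_real t) - 1)) * exp (- \<i> * of_nat k * of_real t)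
     = exp (complex_of_real lam * exp (\<i> * of_real t)) * exp (- \<i> * of_nat k * of_real t) * complex_of_real (exp (- lam))" for t
  proof -
    have "exp (complex_of_real lam * (exp (\<i> * of_real t) - 1)) = exp (complex_of_real lam * exp (\<i> * of_real t) + complex_of_real (- lam))"
      by (simp add: algebra_simps)
    also have "\<dots> = exp (complex_of_real lam * exp (\<i> * of_real t)) * complex_of_real (exp (- lam))"
      by (simp only: exp_add exp_of_real)
    finally show ?thesis by simp
  qed
  show ?thesis unfolding e using has_integral_mult_left[OF fourier_exp[OF lam, of k], of "complex_of_real (exp (- lam))"]
    by (simp add: algebra_simps)
qed

lemma prod_diff_bound:
  fixes a b :: "nat \<Rightarrow> complex" and M :: "nat \<Rightarrow> real"
  assumes "finite I" "\<And>j. j \<in> I \<Longrightarrow> norm (a j) \<le> M j" "\<And>j. j \<in> I \<Longrightarrow> norm (b j) \<le> M j"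
  shows "norm ((\<Prod>j\<in>I. a j) - (\<Prod>j\<in>I. b j)) \<le> (\<Sum>j\<in>I. norm (a j - b j) * (\<Prod>i\<in>I-{j}. M i))"
  using assms
proof (induction I rule: finite_induct)
  case empty
  then show ?case by simp
next
  case (insert x F)
  have Mx: "0 \<le> M x" using insert.prems(1)[of x] norm_ge_zero[of "a x"] by (meson insertI1 order_trans)
  have MF: "0 \<le> (\<Prod>i\<in>F. M i)"
  proof (rule prod_nonneg)
    fix i assume "i \<in> F"
    hence "norm (a i) \<le> M i" using insert.prems(1) by auto
    thus "0 \<le> M i" using norm_ge_zero[of "a i"] by linarith
  qed
  have IH: "norm ((\<Prod>j\<in>F. a j) - (\<Prod>j\<in>F. b j)) \<le> (\<Sum>j\<in>F. norm (a j - b j) * (\<Prod>i\<in>F-{j}. M i))"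
    using insert by auto
  have nb: "norm (\<Prod>j\<in>F. b j) \<le> (\<Prod>i\<in>F. M i)"
    unfolding prod_norm[symmetric] using insert.prems(2) by (intro prod_mono) auto
  have eq: "(\<Prod>j\<in>insert x F. a j) - (\<Prod>j\<in>insert x F. b j) = a x * ((\<Prod>j\<in>F. a j) - (\<Prod>j\<in>F. b j)) + (a x - b x) * (\<Prod>j\<in>F. b j)"
    using insert.hyps by (simp add: algebra_simps)
  have "norm ((\<Prod>j\<in>insert x F. a j) - (\<Prod>j\<in>insert x F. b j)) \<le> norm (a x) * norm ((\<Prod>j\<in>F. a j) - (\<Prod>j\<in>F. b j)) + norm (a x - b x) * norm (\<Prod>j\<in>F. b j)"
    unfolding eq by (metis norm_mult norm_triangle_ineq)
  also have "\<dots> \<le> M x * (\<Sum>j\<in>F. norm (a j - b j) * (\<Prod>i\<in>F-{j}. M i)) + norm (a x - b x) * (\<Prod>i\<in>F. M i)"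
    using insert.prems Mx by (intro add_mono mult_mono IH nb) auto
  also have "\<dots> = (\<Sum>j\<in>insert x F. norm (a j - b j) * (\<Prod>i\<in>insert x F-{j}. M i))"
  proof -
    have "(\<Sum>j\<in>insert x F. norm (a j - b j) * (\<Prod>i\<in>insert x F-{j}. M i)) =
          norm (a x - b x) * (\<Prod>i\<in>insert x F-{x}. M i) + (\<Sum>j\<in>F. norm (a j - b j) * (\<Prod>i\<in>insert x F-{j}. M i))"
      using insert.hyps by (simp add: sum.insert)
    also have "insert x F - {x} = F" using insert.hyps by auto
    also have "(\<Sum>j\<in>F. norm (a j - b j) * (\<Prod>i\<in>insert x F-{j}. M i)) = (\<Sum>j\<in>F. norm (a j - b j) * (M x * (\<Prod>i\<in>F-{j}. M i)))"
    proof (rule sum.cong[OF refl])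
      fix j assume j: "j \<in> F"
      have "insert x F - {j} = insert x (F - {j})" using j insert.hyps by auto
      thus "norm (a j - b j) * (\<Prod>i\<in>insert x F-{j}. M i) = norm (a j - b j) * (M x * (\<Prod>i\<in>F-{j}. M i))"
        using insert.hyps by simp
    qed
    finally show ?thesis by (simp add: sum_distrib_left algebra_simps)
  qed
  finally show ?case .
qed

lemma exp_minus_bound:
  fixes y :: real assumes "0 \<le> y"
  shows "exp y - 1 - y \<le> y^2 * exp y"
proof -
  have g1: "0 \<le> exp u * (u^2 + 2*u - 1) + 1" if "0 \<le> u" for u :: real
  proof -
    have "(\<lambda>x. exp x * (x^2 + 2*x - 1) + 1) 0 \<le> (\<lambda>x. exp x * (x^2 + 2*x - 1) + 1) u"
      by (rule mono0_deriv[where f'="\<lambda>x. exp x * (x^2 + 4*x + 1)"])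
         (use that in \<open>auto intro!: derivative_eq_intros simp: algebra_simps power2_eq_square\<close>)
    thus ?thesis by simp
  qed
  have "(\<lambda>x. x^2 * exp x - exp x + 1 + x) 0 \<le> (\<lambda>x. x^2 * exp x - exp x + 1 + x) y"
    by (rule mono0_deriv[where f'="\<lambda>x. exp x * (x^2 + 2*x - 1) + 1"])
       (use assms g1 in \<open>auto intro!: derivative_eq_intros simp: algebra_simps power2_eq_square\<close>)
  thus ?thesis by simp
qed

lemma ReE [simp]: "Re (exp (\<i> * complex_of_real t)) = cos t" by (simp add: Re_exp)
lemma ImE [simp]: "Im (exp (\<i> * complex_of_real t)) = sin t" by (simp add: Im_exp)

lemma norm_w_sq: "norm (exp (\<i> * complex_of_real t) - 1)^2 = 2 * (1 - cos t)"
proof -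
  have "norm (exp (\<i> * complex_of_real t) - 1)^2 = (cos t - 1)^2 + (sin t)^2"
    by (simp add: cmod_power2)
  also have "\<dots> = 2 * (1 - cos t)" using sin_cos_squared_add[of t] by (simp add: power2_eq_square algebra_simps)
  finally show ?thesis .
qed

lemma factor_a_bound:
  fixes p t :: real assumes p: "0 \<le> p" "p \<le> 1"
  shows "norm (complex_of_real (1 - p) + complex_of_real p * exp (\<i> * complex_of_real t)) \<le> exp (- (p * (1 - p)) * (1 - cos t))"
proof -
  let ?a = "complex_of_real (1 - p) + complex_of_real p * exp (\<i> * complex_of_real t)"
  have "norm ?a ^2 = (1 - p + p * cos t)^2 + (p * sin t)^2" by (simp add: cmod_power2)
  also have "\<dots> = 1 - 2 * (p * (1 - p)) * (1 - cos t) + p^2 * ((sin t)^2 + (cos t)^2 - 1)"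
    by algebra
  also have "\<dots> = 1 - 2 * (p * (1 - p)) * (1 - cos t)" by simp
  also have "\<dots> \<le> exp (- 2 * (p * (1 - p)) * (1 - cos t))"
    using exp_ge_add_one_self[of "- 2 * (p * (1 - p)) * (1 - cos t)"] by simp
  also have "\<dots> = exp (- (p * (1 - p)) * (1 - cos t)) ^ 2"
    by (simp add: power2_eq_square flip: exp_add)
  finally show ?thesis by (rule power2_le_imp_le) simp
qed

lemma factor_b_bound:
  fixes p t :: real assumes p: "0 \<le> p" "p \<le> 1"
  shows "norm (exp (complex_of_real p * (exp (\<i> * complex_of_real t) - 1))) \<le> exp (- (p * (1 - p)) * (1 - cos t))"
proof -
  have "norm (exp (complex_of_real p * (exp (\<i> * complex_of_real t) - 1))) = exp (- p * (1 - cos t))"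
    by (simp add: norm_exp_eq_Re algebra_simps)
  also have "\<dots> \<le> exp (- (p * (1 - p)) * (1 - cos t))"
  proof -
    have "p * (1 - p) \<le> p" using p by (simp add: mult_left_le)
    hence "(p * (1 - p)) * (1 - cos t) \<le> p * (1 - cos t)" by (intro mult_right_mono) auto
    thus ?thesis by simp
  qed
  finally show ?thesis .
qed

lemma factor_diff_bound:
  fixes p t :: real assumes p: "0 \<le> p" "p \<le> 1"
  shows "norm ((complex_of_real (1 - p) + complex_of_real p * exp (\<i> * complex_of_real t)) - exp (complex_of_real p * (exp (\<i> * complex_of_real t) - 1)))
         \<le> 18 * p^2 * (1 - cos t)"
proof -
  define w where "w = exp (\<i> * complex_of_real t) - 1"
  define u where "u = complex_of_real p * w"
  have nw2: "norm w ^2 = 2 * (1 - cos t)" unfolding w_def by (rule norm_w_sq)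
  have nw: "norm w \<le> 2" unfolding w_def
    using norm_triangle_ineq4[of "exp (\<i> * complex_of_real t)" 1] by simp
  have nu: "norm u = p * norm w" unfolding u_def using p by (simp add: norm_mult)
  have nu2: "norm u \<le> 2" using nu nw p by (metis mult_le_one mult.commute mult_right_mono norm_ge_zero order_trans mult_le_cancel_right1 mult_left_le_one_le)
  have eq: "(complex_of_real (1 - p) + complex_of_real p * exp (\<i> * complex_of_real t)) - exp (complex_of_real p * (exp (\<i> * complex_of_real t) - 1))
     = - (exp u - (\<Sum>r<2. u^r /\<^sub>R fact r))"
    unfolding u_def w_def by (simp add: algebra_simps eval_nat_numeral)
  have "norm (exp u - (\<Sum>r<2. u^r /\<^sub>R fact r)) \<le> exp (norm u) - (\<Sum>r<2. norm u ^ r / fact r)"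
    by (rule exp_tail_bound)
  also have "\<dots> = exp (norm u) - 1 - norm u" by (simp add: eval_nat_numeral)
  also have "\<dots> \<le> norm u ^2 * exp (norm u)" by (rule exp_minus_bound) simp
  also have "\<dots> \<le> norm u ^2 * 9"
  proof -
    have "exp (norm u) \<le> exp 2" using nu2 by simp
    also have "exp (2::real) = exp 1 * exp 1" by (simp flip: exp_add)
    also have "\<dots> \<le> 3 * 3" using exp_le by (intro mult_mono) auto
    finally show ?thesis by (intro mult_left_mono) auto
  qed
  also have "norm u ^2 = p^2 * (2 * (1 - cos t))" unfolding nu power_mult_distrib nw2 ..
  also have "p^2 * (2 * (1 - cos t)) * 9 = 18 * p^2 * (1 - cos t)" by simp
  finally show ?thesis unfolding eq norm_minus_cancel .
qed

lemma norm_exp_ikt: "norm (exp (- \<i> * of_nat k * complex_of_real t)) = 1"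
proof -
  have "- \<i> * of_nat k * of_real t = \<i> * complex_of_real (- (real k * t))" by simp
  thus ?thesis by (simp only: norm_exp_i_times)
qed

lemma phi_psi_bound:
  fixes p :: "nat \<Rightarrow> real"
  assumes I: "finite I" and p: "\<And>j. j \<in> I \<Longrightarrow> 0 \<le> p j \<and> p j \<le> 1"
  defines "mu \<equiv> (\<Sum>j\<in>I. p j * (1 - p j))" and "lam \<equiv> (\<Sum>j\<in>I. p j)"
  shows "norm (phi I p t - exp (complex_of_real lam * (exp (\<i> * of_real t) - 1)))
    \<le> 36 * (\<Sum>j\<in>I. (p j)^2) * ((1 - cos t) * exp (- mu * (1 - cos t)))"
proof -
  define x where "x = 1 - cos t"
  have x0: "0 \<le> x" "x \<le> 2" unfolding x_def using cos_ge_minus_one[of t] by auto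
  define a where "a j = complex_of_real (1 - p j) + complex_of_real (p j) * exp (\<i> * complex_of_real t)" for j
  define b where "b j = exp (complex_of_real (p j) * (exp (\<i> * complex_of_real t) - 1))" for j
  define M where "M j = exp (- (p j * (1 - p j)) * x)" for j
  have psi: "exp (complex_of_real lam * (exp (\<i> * of_real t) - 1)) = (\<Prod>j\<in>I. b j)"
  proof -
    have "complex_of_real lam * (exp (\<i> * of_real t) - 1) = (\<Sum>j\<in>I. complex_of_real (p j) * (exp (\<i> * complex_of_real t) - 1))"
      unfolding lam_def by (simp add: sum_distrib_right)
    thus ?thesis unfolding b_def using exp_sum[OF I] by simp
  qed
  have "norm (phi I p t - exp (complex_of_real lam * (exp (\<i> * of_real t) - 1))) = norm ((\<Prod>j\<in>I. a j) - (\<Prod>j\<in>I. b j))"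
    unfolding psi phi_def a_def ..
  also have "\<dots> \<le> (\<Sum>j\<in>I. norm (a j - b j) * (\<Prod>i\<in>I-{j}. M i))"
    using I p factor_a_bound factor_b_bound unfolding a_def b_def M_def x_def by (intro prod_diff_bound) auto
  also have "\<dots> \<le> (\<Sum>j\<in>I. (18 * (p j)^2 * x) * (2 * exp (- mu * x)))"
  proof (rule sum_mono)
    fix j assume j: "j \<in> I"
    have d: "norm (a j - b j) \<le> 18 * (p j)^2 * x"
      using factor_diff_bound[of "p j" t] p[OF j] unfolding a_def b_def x_def by auto
    have "(\<Prod>i\<in>I-{j}. M i) = exp (- (\<Sum>i\<in>I-{j}. p i * (1 - p i)) * x)"
      unfolding M_def using I by (simp add: exp_sum[symmetric] sum_distrib_right sum_negf)
    also have "(\<Sum>i\<in>I-{j}. p i * (1 - p i)) = mu - p j * (1 - p j)"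
      unfolding mu_def using I j by (simp add: sum_diff1)
    also have "exp (- (mu - p j * (1 - p j)) * x) = exp (- mu * x) * exp (p j * (1 - p j) * x)"
      by (simp add: algebra_simps flip: exp_add)
    also have "\<dots> \<le> exp (- mu * x) * 2"
    proof -
      have "1/4 - p j * (1 - p j) = (p j - 1/2)^2" by (simp add: power2_eq_square algebra_simps)
      hence "p j * (1 - p j) \<le> 1/4" by (metis diff_ge_0_iff_ge zero_le_power2)
      hence "p j * (1 - p j) * x \<le> 1/4 * 2" using x0 p[OF j] by (intro mult_mono) auto
      hence "exp (p j * (1 - p j) * x) \<le> exp (1/2)" by simp
      also have "\<dots> \<le> 2" by (rule exp_half_le2)
      finally show ?thesis by (intro mult_left_mono) auto
    qed
    finally have m: "(\<Prod>i\<in>I-{j}. M i) \<le> 2 * exp (- mu * x)" by simp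
    show "norm (a j - b j) * (\<Prod>i\<in>I-{j}. M i) \<le> (18 * (p j)^2 * x) * (2 * exp (- mu * x))"
      by (rule mult_mono[OF d m]) (use x0 in \<open>auto simp: M_def intro: prod_nonneg\<close>)
  qed
  also have "\<dots> = 36 * (\<Sum>j\<in>I. (p j)^2) * (x * exp (- mu * x))"
    by (simp add: sum_distrib_left sum_distrib_right algebra_simps)
  finally show ?thesis unfolding x_def .
qed

theorem local_bound:
  fixes p :: "nat \<Rightarrow> real"
  assumes I: "finite I" and p: "\<And>j. j \<in> I \<Longrightarrow> 0 \<le> p j \<and> p j \<le> 1"
    and mu: "(\<Sum>j\<in>I. p j * (1 - p j)) > 0"
  shows "\<bar>Qd I p k - exp (- (\<Sum>j\<in>I. p j)) * (\<Sum>j\<in>I. p j)^k / fact k\<bar>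
     \<le> 540 * (\<Sum>j\<in>I. (p j)^2) / ((\<Sum>j\<in>I. p j * (1 - p j)) * sqrt (\<Sum>j\<in>I. p j * (1 - p j)))"
proof -
  define mu where "mu = (\<Sum>j\<in>I. p j * (1 - p j))"
  define lam where "lam = (\<Sum>j\<in>I. p j)"
  define s where "s = (\<Sum>j\<in>I. (p j)^2)"
  have s0: "0 \<le> s" unfolding s_def by (simp add: sum_nonneg)
  have mu0: "mu > 0" using mu unfolding mu_def .
  have lam0: "lam \<ge> 0" unfolding lam_def using p by (simp add: sum_nonneg)
  let ?f = "\<lambda>t. phi I p t * exp (- \<i> * of_nat k * of_real t) - exp (complex_of_real lam * (exp (\<i> * of_real t) - 1)) * exp (- \<i> * of_nat k * of_real t)"
  have hi: "(?f has_integral (complex_of_real (2 * pi * Qd I p k) - complex_of_real (2 * pi * (exp (- lam) * lam^k / fact k)))) {-pi..pi}"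
    by (intro has_integral_diff fourier_Q[OF I] fourier_pois[OF lam0])
  let ?g = "\<lambda>t. 36 * s * ((1 - cos t) * exp (- mu * (1 - cos t)))"
  note ib = integral_cos_bound[OF mu0]
  have gi: "?g integrable_on {-pi..pi}" by (intro integrable_continuous_interval continuous_intros)
  have "norm (integral {-pi..pi} ?f) \<le> integral {-pi..pi} ?g"
  proof (rule integral_norm_bound_integral)
    show "?f integrable_on {-pi..pi}" using hi by blast
    show "?g integrable_on {-pi..pi}" by (rule gi)
    fix t :: real
    have "norm (?f t) = norm (phi I p t - exp (complex_of_real lam * (exp (\<i> * of_real t) - 1))) * norm (exp (- \<i> * of_nat k * of_real t))"
      by (simp only: left_diff_distrib[symmetric] norm_mult)
    also have "\<dots> = norm (phi I p t - exp (complex_of_real lam * (exp (\<i> * of_real t) - 1)))" by (simp add: norm_exp_ikt)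
    also have "\<dots> \<le> ?g t" using phi_psi_bound[OF I p, where t=t] unfolding mu_def lam_def s_def by simp
    finally show "norm (?f t) \<le> ?g t" .
  qed
  also have "integral {-pi..pi} ?g = 36 * s * integral {-pi..pi} (\<lambda>t. (1 - cos t) * exp (- mu * (1 - cos t)))"
    by (rule integral_mult_right)
  also have "\<dots> \<le> 36 * s * (30 * pi / (mu * sqrt mu))" using ib(2) s0 by (intro mult_left_mono) auto
  finally have A: "norm (integral {-pi..pi} ?f) \<le> 36 * s * (30 * pi / (mu * sqrt mu))" .
  have "integral {-pi..pi} ?f = complex_of_real (2 * pi * (Qd I p k - exp (- lam) * lam^k / fact k))"
    unfolding integral_unique[OF hi] by (simp only: of_real_diff[symmetric] right_diff_distrib)
  hence "norm (integral {-pi..pi} ?f) = \<bar>2 * pi\<bar> * \<bar>Qd I p k - exp (- lam) * lam^k / fact k\<bar>"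
    by (simp only: norm_of_real abs_mult)
  hence "norm (integral {-pi..pi} ?f) = 2 * pi * \<bar>Qd I p k - exp (- lam) * lam^k / fact k\<bar>"
    using pi_gt_zero by simp
  moreover have "36 * s * (30 * pi / (mu * sqrt mu)) = 2 * pi * (540 * s / (mu * sqrt mu))" by simp
  ultimately have "2 * pi * \<bar>Qd I p k - exp (- lam) * lam^k / fact k\<bar> \<le> 2 * pi * (540 * s / (mu * sqrt mu))"
    using A by linarith
  hence "\<bar>Qd I p k - exp (- lam) * lam^k / fact k\<bar> \<le> 540 * s / (mu * sqrt mu)"
    by (rule mult_left_le_imp_le) simp
  thus ?thesis unfolding mu_def lam_def s_def .
qed

lemma ln_lower_2x: fixes x :: real assumes "0 \<le> x" shows "2 * x / (2 + x) \<le> ln (1 + x)"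
proof -
  have "(\<lambda>y. ln (1 + y) - 2 * y / (2 + y)) 0 \<le> (\<lambda>y. ln (1 + y) - 2 * y / (2 + y)) x"
  proof (rule mono0_deriv[where f'="\<lambda>y. inverse (1 + y) - (2 * (2 + y) - 1 * (2 * y)) / (2 + y)^2"])
    show "0 \<le> x" by fact
    fix y :: real assume y: "0 \<le> y"
    show "((\<lambda>y. ln (1 + y) - 2 * y / (2 + y)) has_real_derivative
          (inverse (1 + y) - (2 * (2 + y) - 1 * (2 * y)) / (2 + y)^2)) (at y)"
      using y by (auto intro!: derivative_eq_intros simp: power2_eq_square field_simps)
    have e1: "(2 * (2 + y) - 1 * (2 * y)) / (2 + y)^2 = 4 / (2 + y)^2" by simp
    have "4 * (1 + y) \<le> (2 + y)^2" by (simp add: power2_eq_square algebra_simps)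
    hence "4 / (2 + y)^2 \<le> 4 / (4 * (1 + y))" using y by (intro divide_left_mono) auto
    also have "\<dots> = inverse (1 + y)" using y by (simp add: field_simps)
    finally show "0 \<le> inverse (1 + y) - (2 * (2 + y) - 1 * (2 * y)) / (2 + y)^2" unfolding e1 by simp
  qed
  thus ?thesis by simp
qed

lemma stirling_upper:
  assumes "k \<ge> 1"
  shows "fact k \<le> exp 1 * sqrt (real k) * real k ^ k * exp (- real k)"
  using assms
proof (induction k rule: dec_induct)
  case base
  then show ?case by (simp add: exp_minus)
next
  case (step m)
  have m: "real m \<ge> 1" using step.hyps by simp
  have key: "exp 1 * sqrt (real m) * real m ^ m \<le> sqrt (real m + 1) * (real m + 1) ^ m"
  proof -
    have "1 \<le> (real m + 1/2) * ln (1 + 1 / real m)"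
    proof -
      have "2 * (1 / real m) / (2 + 1 / real m) \<le> ln (1 + 1 / real m)" by (rule ln_lower_2x) simp
      moreover have "2 * (1 / real m) / (2 + 1 / real m) = 1 / (real m + 1/2)" using m by (simp add: field_simps)
      ultimately have "1 / (real m + 1/2) \<le> ln (1 + 1 / real m)" by simp
      thus ?thesis using m by (simp add: field_simps)
    qed
    hence "exp 1 \<le> exp ((real m + 1/2) * ln (1 + 1 / real m))" by simp
    also have "\<dots> = (1 + 1 / real m) ^ m * sqrt (1 + 1 / real m)"
    proof -
      have pos: "0 < 1 + 1 / real m" using m by (simp add: add_pos_nonneg)
      have "exp ((real m + 1/2) * ln (1 + 1 / real m)) = exp (real m * ln (1 + 1 / real m)) * exp ((1/2) * ln (1 + 1 / real m))"
        by (simp add: algebra_simps flip: exp_add)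
      also have "exp (real m * ln (1 + 1 / real m)) = (1 + 1 / real m) ^ m" using pos by (simp add: exp_of_nat_mult)
      also have "exp ((1/2) * ln (1 + 1 / real m)) = (1 + 1 / real m) powr (1/2)"
        using pos by (simp add: powr_def)
      also have "\<dots> = sqrt (1 + 1 / real m)" using pos by (simp add: powr_half_sqrt)
      finally show ?thesis .
    qed
    finally have e: "exp 1 \<le> (1 + 1 / real m) ^ m * sqrt (1 + 1 / real m)" .
    have "exp 1 * (sqrt (real m) * real m ^ m) \<le> ((1 + 1 / real m) ^ m * sqrt (1 + 1 / real m)) * (sqrt (real m) * real m ^ m)"
      by (rule mult_right_mono[OF e]) simp
    also have "\<dots> = sqrt (real m + 1) * (real m + 1) ^ m"
    proof -
      have "(1 + 1 / real m) ^ m * real m ^ m = (real m + 1) ^ m" using m by (simp add: power_mult_distrib[symmetric] field_simps)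
      moreover have "sqrt (1 + 1 / real m) * sqrt (real m) = sqrt (real m + 1)" using m by (simp add: real_sqrt_mult[symmetric] field_simps)
      ultimately show ?thesis by (metis (no_types, lifting) mult.assoc mult.left_commute)
    qed
    finally show ?thesis by (simp add: mult.assoc)
  qed
  have "fact (Suc m) = (real m + 1) * fact m" by simp
  also have "\<dots> \<le> (real m + 1) * (exp 1 * sqrt (real m) * real m ^ m * exp (- real m))"
    using step.IH by (intro mult_left_mono) auto
  also have "\<dots> = (real m + 1) * exp (- real m) * (exp 1 * sqrt (real m) * real m ^ m)" by (simp add: algebra_simps)
  also have "\<dots> \<le> (real m + 1) * exp (- real m) * (sqrt (real m + 1) * (real m + 1) ^ m)"
    by (rule mult_left_mono[OF key]) simp
  also have "\<dots> = exp 1 * sqrt (real (Suc m)) * real (Suc m) ^ Suc m * exp (- real (Suc m))"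
    by (simp add: exp_diff exp_minus field_simps)
  finally show ?case .
qed
lemma aux_eq:
  fixes A B X K e f s :: real
  assumes "K > 0" "s > 0" "e > 0" "f > 0" "A * B = X * (e * f)"
  shows "X / s = A * (K * B) / (e * s * K * f)"
proof -
  have "A * (K * B) / (e * s * K * f) = (A * B) / (e * s * f)" using assms(1) by simp
  also have "\<dots> = X / s" unfolding assms(5) using assms(3,4) by simp
  finally show ?thesis by simp
qed

lemma pois_lower:
  fixes t :: real
  assumes k: "k \<ge> 1" and t: "0 \<le> t" "t \<le> sqrt (real k) / 8"
  shows "exp (-2) / sqrt (real k) \<le> exp (- (real k - t)) * (real k - t)^k / fact k"
proof -
  have k1: "real k \<ge> 1" using k by simp
  have "real k \<le> real k ^ 2" using k1 by (simp add: power2_eq_square)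
  hence "sqrt (real k) \<le> sqrt (real k ^ 2)" by (rule real_sqrt_le_mono)
  hence sk: "sqrt (real k) \<le> real k" by simp
  have sk0: "sqrt (real k) > 0" using k1 by simp
  define x where "x = - t / real k"
  have "t \<le> real k / 8" using t sk by linarith
  hence "t / real k \<le> (real k / 8) / real k" using k1 by (intro divide_right_mono) auto
  hence "t / real k \<le> 1/8" using k1 by simp
  moreover have "0 \<le> t / real k" using t k1 by simp
  moreover have "\<bar>x\<bar> = t / real k" unfolding x_def using t k1 by simp
  ultimately have xb: "\<bar>x\<bar> \<le> 1/2" by linarith
  have lnb: "\<bar>ln (1 + x) - x\<bar> \<le> 2 * x^2" by (rule abs_ln_one_plus_x_minus_x_bound[OF xb])
  have x1: "1 + x > 0" using xb by auto
  have lamk: "real k - t = real k * (1 + x)" using k1 by (simp add: x_def field_simps)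
  have "(1 + x)^k = exp (real k * ln (1 + x))" using x1 by (simp add: exp_of_nat_mult)
  also have "\<dots> \<ge> exp (real k * (x - 2 * x^2))"
  proof -
    have "x - 2 * x^2 \<le> ln (1 + x)" using lnb by linarith
    thus ?thesis using k1 by (simp add: mult_left_mono)
  qed
  finally have pw: "exp (real k * (x - 2 * x^2)) \<le> (1 + x)^k" .
  define q where "q = t^2 / real k"
  have tt: "q \<le> 1/64"
  proof -
    have "t^2 \<le> (sqrt (real k) / 8)^2" using t by (intro power_mono) auto
    also have "\<dots> = real k / 64" using k1 by (simp add: power_divide)
    finally show ?thesis using k1 unfolding q_def by (simp add: divide_simps)
  qed
  have kx: "real k * (x - 2 * x^2) = - t - 2 * q" using k1 by (simp add: x_def q_def power2_eq_square field_simps)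
  have pw2: "exp (- t - 2 * q) \<le> (1 + x)^k" using pw unfolding kx .
  have st: "fact k \<le> exp 1 * sqrt (real k) * real k ^ k * exp (- real k)" by (rule stirling_upper[OF k])
  have fpos: "(0::real) < fact k" by simp
  have E1: "exp (- (real k - t)) * exp (- t - 2 * q) = exp (- 1 - 2 * q) * (exp 1 * exp (- real k))"
    by (simp flip: exp_add)
  have "exp (-2) / sqrt (real k) \<le> exp (- 1 - 2 * q) / sqrt (real k)"
    using tt sk0 by (intro divide_right_mono) auto
  also have "\<dots> = exp (- (real k - t)) * (real k ^ k * exp (- t - 2 * q)) / (exp 1 * sqrt (real k) * real k ^ k * exp (- real k))"
    by (rule aux_eq[OF _ sk0 _ _ E1]) (use k1 in auto)
  also have "\<dots> \<le> exp (- (real k - t)) * (real k ^ k * (1 + x)^k) / (exp 1 * sqrt (real k) * real k ^ k * exp (- real k))"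
    using pw2 k1 sk0 by (intro divide_right_mono mult_left_mono) auto
  also have "\<dots> \<le> exp (- (real k - t)) * (real k ^ k * (1 + x)^k) / fact k"
    using st fpos x1 k1 by (intro divide_left_mono mult_nonneg_nonneg) auto
  also have "real k ^ k * (1 + x)^k = (real k - t)^k" unfolding lamk by (simp add: power_mult_distrib)
  finally show ?thesis .
qed

lemma Q_S:
  fixes a :: real and d :: "nat \<Rightarrow> nat"
  assumes I: "finite I" and a: "a \<ge> 0"
  shows "Qd I (\<lambda>j. a * real (d j) / (a * real (d j) + 1)) k =
    a^k * (\<Sum>T\<in>{T. T \<subseteq> I \<and> card T = k}. \<Prod>j\<in>T. real (d j)) / (\<Prod>j\<in>I. a * real (d j) + 1)"
proof -
  have pos: "\<And>j. a * real (d j) + 1 > 0" using a by (simp add: add_nonneg_pos)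
  have trm: "(\<Prod>j\<in>T. a * real (d j) / (a * real (d j) + 1)) * (\<Prod>j\<in>I-T. 1 - a * real (d j) / (a * real (d j) + 1))
     = a^k * (\<Prod>j\<in>T. real (d j)) / (\<Prod>j\<in>I. a * real (d j) + 1)" if T: "T \<subseteq> I" "card T = k" for T
  proof -
    have fT: "finite T" using T I finite_subset by auto
    have q: "1 - a * real (d j) / (a * real (d j) + 1) = 1 / (a * real (d j) + 1)" for j
      using pos[of j] by (simp add: field_simps)
    have "(\<Prod>j\<in>T. a * real (d j) / (a * real (d j) + 1)) = (\<Prod>j\<in>T. a * real (d j)) / (\<Prod>j\<in>T. a * real (d j) + 1)"
      by (rule prod_dividef)
    moreover have "(\<Prod>j\<in>I-T. 1 - a * real (d j) / (a * real (d j) + 1)) = 1 / (\<Prod>j\<in>I-T. a * real (d j) + 1)"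
      unfolding q by (simp add: prod_dividef)
    moreover have "(\<Prod>j\<in>I. a * real (d j) + 1) = (\<Prod>j\<in>I-T. a * real (d j) + 1) * (\<Prod>j\<in>T. a * real (d j) + 1)"
      by (rule prod.subset_diff[OF T(1) I])
    moreover have "(\<Prod>j\<in>T. a * real (d j)) = a^k * (\<Prod>j\<in>T. real (d j))"
      using T by (simp add: prod.distrib)
    moreover have "(\<Prod>j\<in>I-T. a * real (d j) + 1) > 0" "(\<Prod>j\<in>T. a * real (d j) + 1) > 0"
      using pos by (auto intro: prod_pos)
    ultimately show ?thesis by (simp add: field_simps)
  qed
  have "Qd I (\<lambda>j. a * real (d j) / (a * real (d j) + 1)) k =
     (\<Sum>T\<in>{T. T \<subseteq> I \<and> card T = k}. a^k * (\<Prod>j\<in>T. real (d j)) / (\<Prod>j\<in>I. a * real (d j) + 1))"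
    unfolding Qd_def by (rule sum.cong[OF refl]) (use trm in blast)
  also have "\<dots> = a^k * (\<Sum>T\<in>{T. T \<subseteq> I \<and> card T = k}. \<Prod>j\<in>T. real (d j)) / (\<Prod>j\<in>I. a * real (d j) + 1)"
    by (simp add: sum_divide_distrib[symmetric] sum_distrib_left)
  finally show ?thesis .
qed

lemma Q_B:
  fixes a :: real
  assumes I: "finite I"
  shows "Qd I (\<lambda>j. a) k = real (card I choose k) * a^k * (1 - a)^(card I - k)"
proof -
  have "Qd I (\<lambda>j. a) k = (\<Sum>T\<in>{T. T \<subseteq> I \<and> card T = k}. a^k * (1 - a)^(card I - k))"
    unfolding Qd_def
  proof (rule sum.cong[OF refl])
    fix T assume "T \<in> {T. T \<subseteq> I \<and> card T = k}"
    hence T: "T \<subseteq> I" "card T = k" by auto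
    have "card (I - T) = card I - k" using T I by (simp add: card_Diff_subset finite_subset)
    thus "(\<Prod>j\<in>T. a) * (\<Prod>j\<in>I - T. 1 - a) = a^k * (1 - a)^(card I - k)" using T by simp
  qed
  also have "\<dots> = real (card I choose k) * (a^k * (1 - a)^(card I - k))"
    using n_subsets[OF I, of k] by simp
  finally show ?thesis by simp
qed

lemma ratio_bound:
  fixes Q P X L :: real
  assumes "\<bar>Q - P\<bar> \<le> X" "L \<le> P" "0 < L"
  shows "\<bar>Q / P - 1\<bar> \<le> X / L"
proof -
  have P0: "P > 0" using assms by linarith
  have "Q / P - 1 = (Q - P) / P" using P0 by (simp add: diff_divide_distrib)
  hence "\<bar>Q / P - 1\<bar> = \<bar>Q - P\<bar> / P" using P0 by (simp add: abs_divide)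
  also have "\<dots> \<le> X / P" using assms(1) P0 by (intro divide_right_mono) auto
  also have "\<dots> \<le> X / L" using assms abs_ge_zero[of "Q - P"] by (intro divide_left_mono) auto
  finally show ?thesis .
qed

lemma mu_lower:
  fixes mu :: real and k :: nat
  assumes "real k / 2 \<le> mu" "k \<ge> 1"
  shows "real k * sqrt (real k) / 3 \<le> mu * sqrt mu"
proof -
  have s2: "sqrt 2 \<le> 3/2" by (rule real_le_lsqrt) (auto simp: power2_eq_square)
  have e: "sqrt (real k / 2) * sqrt 2 = sqrt (real k)" by (simp add: real_sqrt_mult[symmetric])
  have "sqrt (real k) \<le> sqrt (real k / 2) * (3/2)" unfolding e[symmetric] by (rule mult_left_mono[OF s2]) simp
  hence a: "sqrt (real k) * (2/3) \<le> sqrt (real k / 2)" by linarith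
  have "sqrt (real k / 2) \<le> sqrt mu" using assms(1) by (rule real_sqrt_le_mono)
  with a have b: "sqrt (real k) * (2/3) \<le> sqrt mu" by linarith
  have "real k * sqrt (real k) / 3 = (real k / 2) * (sqrt (real k) * (2/3))" by simp
  also have "\<dots> \<le> mu * sqrt mu" using assms(1) b by (intro mult_mono) auto
  finally show ?thesis .
qed

lemma per_n_S:
  fixes n k :: nat and d :: "nat \<Rightarrow> nat"
  assumes deg: "(\<Sum>j=1..n. d j) = n" and k1: "1 \<le> k" and kn: "k \<le> n"
    and Bsm: "real k * sqrt (real k) * moment n d 2 / real n ^ 2 \<le> 1/30000"
  defines "a \<equiv> real k / real n"
  defines "Bv \<equiv> real k * sqrt (real k) * moment n d 2 / real n ^ 2"
  defines "lam \<equiv> (\<Sum>j=1..n. a * real (d j) / (a * real (d j) + 1))"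
  shows "a \<le> Bv" "0 < a" "0 \<le> Bv" "real k - lam \<le> sqrt (real k) * Bv" "0 \<le> real k - lam"
    "\<bar>Qd {1..n} (\<lambda>j. a * real (d j) / (a * real (d j) + 1)) k - exp (- lam) * lam ^ k / fact k\<bar>
       \<le> 1620 * Bv / real k"
proof -
  define I where "I = {1..n::nat}"
  have fI: "finite I" and cI: "card I = n" unfolding I_def by auto
  define m2 where "m2 = moment n d 2"
  have n1: "real n \<ge> 1" using k1 kn by simp
  have kr: "real k \<ge> 1" using k1 by simp
  have kn': "real k \<le> real n" using kn by simp
  show a0: "0 < a" unfolding a_def using kr n1 by simp
  have a1: "a \<le> 1" unfolding a_def using kn' n1 by simp
  have sumd: "(\<Sum>j\<in>I. real (d j)) = real n"
    using deg unfolding I_def by (metis of_nat_sum)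
  have m2def: "m2 = (\<Sum>j\<in>I. real (d j)^2)" unfolding m2_def moment_def I_def ..
  have m2n: "real n \<le> m2"
  proof -
    have "(\<Sum>j\<in>I. real (d j)) \<le> (\<Sum>j\<in>I. real (d j)^2)"
    proof (rule sum_mono)
      fix j
      show "real (d j) \<le> real (d j)^2" by (cases "d j") (auto simp: power2_eq_square)
    qed
    thus ?thesis using sumd m2def by simp
  qed
  have sk1: "1 \<le> sqrt (real k)" using kr by simp
  have skk: "sqrt (real k) * sqrt (real k) = real k" using kr by simp
  have Bv_eq: "Bv = a * (sqrt (real k) * m2 / real n)"
    unfolding Bv_def a_def m2_def using n1 by (simp add: power2_eq_square field_simps)
  show Bv0: "0 \<le> Bv" unfolding Bv_eq using a0 m2n n1 sk1 by simp
  show aB: "a \<le> Bv"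
  proof -
    have "1 \<le> m2 / real n" using m2n n1 by simp
    hence "1 \<le> sqrt (real k) * (m2 / real n)" using sk1 by (metis mult_mono' mult_1_left order.trans zero_le_one)
    hence "a * 1 \<le> a * (sqrt (real k) * m2 / real n)" using a0 by (intro mult_left_mono) auto
    thus ?thesis unfolding Bv_eq by simp
  qed
  have a2m: "a^2 * m2 = sqrt (real k) * Bv"
  proof -
    have "sqrt (real k) * Bv = (sqrt (real k) * sqrt (real k)) * real k * m2 / real n ^ 2"
      unfolding Bv_def m2_def by (simp add: algebra_simps)
    also have "\<dots> = a^2 * m2" unfolding skk a_def by (simp add: power2_eq_square)
    finally show ?thesis by simp
  qed
  have Bd: "Bv \<le> 1/30000" using Bsm unfolding Bv_def .
  have skB: "sqrt (real k) * Bv \<le> real k / 30000"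
  proof -
    have "sqrt (real k) * Bv \<le> sqrt (real k) * (1/30000)" using Bd sk1 by (intro mult_left_mono) auto
    also have "\<dots> \<le> real k / 30000" using real_sqrt_le_mono[of "real k" "real k ^ 2"] kr by (simp add: power2_eq_square)
    finally show ?thesis .
  qed
  define p where "p j = a * real (d j) / (a * real (d j) + 1)" for j
  have den: "a * real (d j) + 1 \<ge> 1" for j using a0 by simp
  have p0: "0 \<le> p j" for j unfolding p_def using a0 by simp
  have p1: "p j \<le> 1" for j unfolding p_def using den[of j] by (simp add: divide_le_eq_1)
  have pad: "p j \<le> a * real (d j)" for j
    unfolding p_def using den[of j] a0 by (simp add: divide_le_eq mult_le_cancel_left1 mult_left_le)
  have lam_def': "lam = (\<Sum>j\<in>I. p j)" unfolding lam_def I_def p_def ..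
  have diffp: "a * real (d j) - p j = (a * real (d j))^2 / (a * real (d j) + 1)" for j
    unfolding p_def using den[of j] by (simp add: field_simps power2_eq_square)
  have dp0: "0 \<le> a * real (d j) - p j" for j using pad[of j] by simp
  have dp1: "a * real (d j) - p j \<le> (a * real (d j))^2" for j
    unfolding diffp using den[of j] by (simp add: divide_le_eq mult_le_cancel_left1 mult_left_le)
  have klam: "real k - lam = (\<Sum>j\<in>I. a * real (d j) - p j)"
  proof -
    have "(\<Sum>j\<in>I. a * real (d j)) = a * real n" using sumd by (simp add: sum_distrib_left[symmetric])
    also have "\<dots> = real k" unfolding a_def using n1 by simp
    finally show ?thesis unfolding lam_def' by (simp add: sum_subtractf)
  qed
  have sq: "(\<Sum>j\<in>I. (a * real (d j))^2) = a^2 * m2" unfolding m2def by (simp add: power_mult_distrib sum_distrib_left)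
  show t0: "0 \<le> real k - lam" unfolding klam using dp0 by (simp add: sum_nonneg)
  have t1': "real k - lam \<le> a^2 * m2" unfolding klam sq[symmetric] using dp1 by (rule sum_mono)
  show t1: "real k - lam \<le> sqrt (real k) * Bv" using t1' a2m by simp
  define s1 where "s1 = (\<Sum>j\<in>I. (p j)^2)"
  have s1b: "s1 \<le> sqrt (real k) * Bv"
  proof -
    have "s1 \<le> (\<Sum>j\<in>I. (a * real (d j))^2)" unfolding s1_def
      using pad p0 by (intro sum_mono power_mono) auto
    thus ?thesis using sq a2m by simp
  qed
  have s10: "0 \<le> s1" unfolding s1_def by (simp add: sum_nonneg)
  have mueq: "(\<Sum>j\<in>I. p j * (1 - p j)) = lam - s1"
    unfolding lam_def' s1_def by (simp add: algebra_simps power2_eq_square sum_subtractf)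
  have mub: "real k / 2 \<le> lam - s1" using t1 s1b skB by linarith
  have mupos: "0 < (\<Sum>j\<in>I. p j * (1 - p j))" unfolding mueq using mub kr by linarith
  have p01: "\<And>j. j \<in> I \<Longrightarrow> 0 \<le> p j \<and> p j \<le> 1" using p0 p1 by auto
  note LB = local_bound[OF fI p01 mupos, of k]
  have LB2: "\<bar>Qd I p k - exp (- lam) * lam ^ k / fact k\<bar> \<le> 540 * s1 / ((lam - s1) * sqrt (lam - s1))"
    using LB unfolding mueq lam_def'[symmetric] s1_def[symmetric] .
  have ml: "real k * sqrt (real k) / 3 \<le> (lam - s1) * sqrt (lam - s1)" by (rule mu_lower[OF mub k1])
  have kpos: "0 < real k * sqrt (real k) / 3" using kr by simp
  have "540 * s1 / ((lam - s1) * sqrt (lam - s1)) \<le> 540 * s1 / (real k * sqrt (real k) / 3)"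
    using ml kpos s10 mub kr by (intro divide_left_mono mult_pos_pos) auto
  also have "\<dots> \<le> 540 * (sqrt (real k) * Bv) / (real k * sqrt (real k) / 3)"
    using s1b kpos by (intro divide_right_mono) auto
  also have "\<dots> = 1620 * Bv / real k" using kr by (simp add: field_simps)
  finally have "\<bar>Qd I p k - exp (- lam) * lam ^ k / fact k\<bar> \<le> 1620 * Bv / real k" using LB2 by linarith
  thus "\<bar>Qd {1..n} (\<lambda>j. a * real (d j) / (a * real (d j) + 1)) k - exp (- lam) * lam ^ k / fact k\<bar>
       \<le> 1620 * Bv / real k" unfolding I_def p_def .
qed

lemma per_n_B:
  fixes n k :: nat and a :: real
  assumes k1: "1 \<le> k" and kn: "k \<le> n" and a: "a = real k / real n" and asm: "a \<le> 1/2"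
  shows "\<bar>Qd {1..n} (\<lambda>j. a) k - exp (- real k) * real k ^ k / fact k\<bar> \<le> 1620 * a / sqrt (real k)"
proof -
  define I where "I = {1..n::nat}"
  have fI: "finite I" and cI: "card I = n" unfolding I_def by auto
  have n1: "real n \<ge> 1" using k1 kn by simp
  have kr: "real k \<ge> 1" using k1 by simp
  have a0: "0 < a" unfolding a using kr n1 by simp
  have lamB: "(\<Sum>j\<in>I. a) = real k" unfolding a using cI n1 by simp
  have sB: "(\<Sum>j\<in>I. a^2) = real k * a" unfolding a using cI n1 by (simp add: power2_eq_square)
  have muB: "(\<Sum>j\<in>I. a * (1 - a)) = real k * (1 - a)" using lamB by (simp add: sum_distrib_right[symmetric])
  have "real k * (1/2) \<le> real k * (1 - a)" using asm kr by (intro mult_left_mono) auto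
  hence mub: "real k / 2 \<le> real k * (1 - a)" by simp
  have mupos: "0 < (\<Sum>j\<in>I. a * (1 - a))" unfolding muB using mub kr by linarith
  have p01: "\<And>j. j \<in> I \<Longrightarrow> 0 \<le> a \<and> a \<le> 1" using a0 asm by auto
  note LB = local_bound[where p="\<lambda>j. a" and k=k and I=I, OF fI p01 mupos]
  have LB2: "\<bar>Qd I (\<lambda>j. a) k - exp (- real k) * real k ^ k / fact k\<bar> \<le> 540 * (real k * a) / ((real k * (1 - a)) * sqrt (real k * (1 - a)))"
    using LB unfolding muB lamB sB .
  have ml: "real k * sqrt (real k) / 3 \<le> (real k * (1 - a)) * sqrt (real k * (1 - a))" by (rule mu_lower[OF mub k1])
  have kpos: "0 < real k * sqrt (real k) / 3" using kr by simp
  have "540 * (real k * a) / ((real k * (1 - a)) * sqrt (real k * (1 - a))) \<le> 540 * (real k * a) / (real k * sqrt (real k) / 3)"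
    using ml kpos a0 kr mub by (intro divide_left_mono mult_pos_pos) auto
  also have "\<dots> = 1620 * a / sqrt (real k)" using kr by (simp add: field_simps)
  finally show ?thesis using LB2 unfolding I_def by linarith
qed

lemma combine_eps:
  fixes e1 e2 B :: real
  assumes "\<bar>e1\<bar> \<le> X" "\<bar>e2\<bar> \<le> Y" "Y \<le> 1/2"
  shows "\<bar>(1 + e1) / (1 + e2) - 1\<bar> \<le> 2 * (X + Y)"
proof -
  have p: "1 + e2 \<ge> 1/2" using assms by linarith
  have "(1 + e1) / (1 + e2) - 1 = (e1 - e2) / (1 + e2)" using p by (simp add: field_simps)
  hence "\<bar>(1 + e1) / (1 + e2) - 1\<bar> = \<bar>e1 - e2\<bar> / (1 + e2)" using p by (simp add: abs_divide)
  also have "\<dots> \<le> \<bar>e1 - e2\<bar> / (1/2)" using p by (intro divide_left_mono) auto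
  also have "\<dots> = 2 * \<bar>e1 - e2\<bar>" by simp
  also have "\<bar>e1 - e2\<bar> \<le> X + Y" using assms abs_triangle_ineq4[of e1 e2] by linarith
  finally show ?thesis by simp
qed

lemma final_alg:
  fixes A P pS pB x C QS QB e :: real
  assumes "A \<noteq> 0" "P \<noteq> 0" "pS \<noteq> 0" "pB \<noteq> 0" "x \<noteq> 0" "C \<noteq> 0" "QS = x * e / P" "QB = C * x * A"
  shows "A * P * (pS / pB) * ((QS / pS) / (QB / pB)) = e / C"
  using assms by (simp add: field_simps)

lemma per_n:
  fixes n k :: nat and d :: "nat \<Rightarrow> nat"
  assumes deg: "(\<Sum>j=1..n. d j) = n" and k1: "1 \<le> k" and kn: "k \<le> n"
    and Bsm: "real k * sqrt (real k) * moment n d 2 / real n ^ 2 \<le> 1/30000"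
  defines "a \<equiv> real k / real n"
  defines "Bv \<equiv> real k * sqrt (real k) * moment n d 2 / real n ^ 2"
  defines "lam \<equiv> (\<Sum>j=1..n. a * real (d j) / (a * real (d j) + 1))"
  shows "\<exists>\<epsilon>. \<bar>\<epsilon>\<bar> \<le> 60000 * Bv \<and>
     gfun n d k = (1 - a) ^ (n - k) * (\<Prod>j=1..n. a * real (d j) + 1) * exp (real k - lam) * (lam / real k) ^ k * (1 + \<epsilon>)"
proof -
  note S = per_n_S[OF deg k1 kn Bsm, folded a_def Bv_def, folded lam_def]
  have kr: "real k \<ge> 1" using k1 by simp
  have n1: "real n \<ge> 1" using k1 kn by simp
  have sk0: "0 < sqrt (real k)" using kr by simp
  have Bd: "Bv \<le> 1/30000" using Bsm unfolding Bv_def .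
  have a12: "a \<le> 1/2" using S(1) Bd by linarith
  define QS where "QS = Qd {1..n} (\<lambda>j. a * real (d j) / (a * real (d j) + 1)) k"
  define QB where "QB = Qd {1..n} (\<lambda>j. a) k"
  define pS where "pS = exp (- lam) * lam ^ k / fact k"
  define pB where "pB = exp (- real k) * real k ^ k / fact k"
  have tS: "real k - lam \<le> sqrt (real k) / 8"
  proof -
    have "sqrt (real k) * Bv \<le> sqrt (real k) * (1/8)" using Bd sk0 by (intro mult_left_mono) auto
    thus ?thesis using S(4) by simp
  qed
  have pSl: "exp (-2) / sqrt (real k) \<le> pS"
    using pois_lower[OF k1 S(5) tS] unfolding pS_def by simp
  have pBl: "exp (-2) / sqrt (real k) \<le> pB"
    using pois_lower[OF k1, of 0] unfolding pB_def by simp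
  have Lpos: "0 < exp (-2) / sqrt (real k)" using sk0 by simp
  have e2: "exp (2::real) \<le> 9"
  proof -
    have "exp (2::real) = exp 1 * exp 1" by (simp flip: exp_add)
    also have "\<dots> \<le> 3 * 3" using exp_le by (intro mult_mono) auto
    finally show ?thesis by simp
  qed
  define e1 where "e1 = QS / pS - 1"
  define e2' where "e2' = QB / pB - 1"
  have E1: "\<bar>e1\<bar> \<le> 14580 * Bv"
  proof -
    have "\<bar>e1\<bar> \<le> (1620 * Bv / real k) / (exp (-2) / sqrt (real k))"
      unfolding e1_def by (rule ratio_bound[OF S(6)[folded QS_def, unfolded pS_def[symmetric]] pSl Lpos])
    also have "\<dots> = 1620 * Bv * exp 2 * (sqrt (real k) / real k)" using kr by (simp add: exp_minus field_simps)
    also have "\<dots> \<le> 1620 * Bv * 9 * 1"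
    proof (intro mult_mono)
      show "sqrt (real k) / real k \<le> 1" using real_sqrt_le_mono[of "real k" "real k ^ 2"] kr by (simp add: power2_eq_square)
    qed (use e2 S(3) in auto)
    finally show ?thesis by simp
  qed
  have E2: "\<bar>e2'\<bar> \<le> 14580 * Bv"
  proof -
    have "\<bar>e2'\<bar> \<le> (1620 * a / sqrt (real k)) / (exp (-2) / sqrt (real k))"
      unfolding e2'_def by (rule ratio_bound[OF per_n_B[OF k1 kn meta_eq_to_obj_eq[OF a_def] a12, folded QB_def, unfolded pB_def[symmetric]] pBl Lpos])
    also have "\<dots> = 1620 * a * exp 2" using sk0 by (simp add: exp_minus field_simps)
    also have "\<dots> \<le> 1620 * Bv * 9" using e2 S(1) S(2) by (intro mult_mono) auto
    finally show ?thesis by simp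
  qed
  have E2h: "14580 * Bv \<le> 1/2" using Bd by simp
  define eps where "eps = (1 + e1) / (1 + e2') - 1"
  have epsb: "\<bar>eps\<bar> \<le> 60000 * Bv"
    using combine_eps[OF E1 E2 E2h] S(3) unfolding eps_def by simp
  have pS0: "pS > 0" using pSl Lpos by linarith
  have pB0: "pB > 0" using pBl Lpos by linarith
  have C: "real (n choose k) = fact n / (fact k * fact (n - k))" by (rule binomial_fact[OF kn])
  have C0: "real (n choose k) \<noteq> 0" using kn by simp
  define e where "e = (\<Sum>S\<in>{S. S \<subseteq> {1..n} \<and> card S = k}. \<Prod>j\<in>S. real (d j))"
  have g: "gfun n d k = e / real (n choose k)"
    unfolding gfun_def falling_def e_def C by (simp add: field_simps)
  define P where "P = (\<Prod>j=1..n. a * real (d j) + 1)"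
  have P0: "P \<noteq> 0" unfolding P_def using S(2) by (intro prod_pos[THEN less_imp_neq, symmetric]) (auto simp: add_nonneg_pos)
  have QSe: "QS = a ^ k * e / P" unfolding QS_def e_def P_def using Q_S[of "{1..n}" a d k] S(2) by simp
  have QBe: "QB = real (n choose k) * a ^ k * (1 - a) ^ (n - k)" unfolding QB_def using Q_B[of "{1..n}" a k] by simp
  have A0: "(1 - a) ^ (n - k) \<noteq> 0" using a12 by simp
  have x0: "a ^ k \<noteq> 0" using S(2) by simp
  have pp: "exp (real k - lam) * (lam / real k) ^ k = pS / pB"
  proof -
    have "pS / pB = (exp (- lam) / exp (- real k)) * (lam ^ k / real k ^ k)" unfolding pS_def pB_def by (simp add: field_simps)
    also have "exp (- lam) / exp (- real k) = exp (real k - lam)" by (simp flip: exp_diff)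
    also have "lam ^ k / real k ^ k = (lam / real k) ^ k" by (simp add: power_divide)
    finally show ?thesis by simp
  qed
  have "(1 - a) ^ (n - k) * P * exp (real k - lam) * (lam / real k) ^ k * (1 + eps)
      = (1 - a) ^ (n - k) * P * (pS / pB) * ((QS / pS) / (QB / pB))"
    unfolding eps_def e1_def e2'_def using pp by (simp add: mult.assoc)
  also have "\<dots> = e / real (n choose k)"
    by (rule final_alg[OF A0 P0 _ _ x0 C0 QSe]) (use pS0 pB0 QBe in \<open>auto simp: mult_ac\<close>)
  finally have "gfun n d k = (1 - a) ^ (n - k) * P * exp (real k - lam) * (lam / real k) ^ k * (1 + eps)"
    using g by simp
  thus ?thesis using epsb unfolding P_def by blast
qed

lemma moment_ge:
  assumes "is_degree_seq n d" shows "real n \<le> moment n d 2"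
proof -
  have "real n = (\<Sum>j=1..n. real (d j))" using assms unfolding is_degree_seq_def by (metis of_nat_sum)
  also have "\<dots> \<le> (\<Sum>j=1..n. real (d j)^2)"
  proof (rule sum_mono)
    fix j
    show "real (d j) \<le> real (d j)^2" by (cases "d j") (auto simp: power2_eq_square)
  qed
  finally show ?thesis unfolding moment_def .
qed

lemma powr_32: fixes x :: real assumes "0 \<le> x" shows "x powr (3/2) = x * sqrt x"
proof (cases "x = 0")
  case True thus ?thesis by simp
next
  case False
  hence "x > 0" using assms by simp
  have "x powr (3/2) = x powr (1 + 1/2)" by simp
  also have "\<dots> = x powr 1 * x powr (1/2)" by (rule powr_add)
  also have "\<dots> = x * sqrt x" using \<open>x > 0\<close> by (simp add: powr_half_sqrt)
  finally show ?thesis .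
qed

lemma small_bound:
  fixes kk m2 c :: real and n :: nat
  assumes n: "real n \<ge> 1" and m: "m2 \<ge> real n" and k0: "kk \<ge> 0" and c: "0 < c" "c \<le> 1"
    and kb: "\<bar>kk\<bar> \<le> c * \<bar>(real n ^ 2 / m2) powr (2/3)\<bar>"
  shows "kk powr (3/2) * m2 / real n ^ 2 \<le> c"
proof -
  define R where "R = real n ^ 2 / m2"
  have m0: "m2 > 0" using n m by linarith
  have R0: "R > 0" unfolding R_def using n m0 by simp
  have kb': "kk \<le> c * R powr (2/3)" using kb k0 unfolding R_def by simp
  have "kk powr (3/2) \<le> (c * R powr (2/3)) powr (3/2)" using kb' k0 by (intro powr_mono2) auto
  also have "\<dots> = c powr (3/2) * R" using R0 c by (simp add: powr_mult powr_powr)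
  also have "c powr (3/2) \<le> c"
  proof -
    have "c powr (3/2) = c * sqrt c" using c by (simp add: powr_32)
    also have "\<dots> \<le> c * 1" using c by (intro mult_left_mono) auto
    finally show ?thesis by simp
  qed
  hence "c powr (3/2) * R \<le> c * R" using R0 by (intro mult_right_mono) auto
  finally have "kk powr (3/2) \<le> c * R" by simp
  hence "kk powr (3/2) * m2 / real n ^ 2 \<le> c * R * m2 / real n ^ 2" using m0 n by (intro divide_right_mono mult_right_mono) auto
  also have "\<dots> = c" unfolding R_def using m0 n by (simp add: field_simps)
  finally show ?thesis .
qed

theorem lemma3p5:
  fixes d :: "nat \<Rightarrow> nat \<Rightarrow> nat" and k :: "nat \<Rightarrow> nat"
  assumes deg: "\<And>n. is_degree_seq n (d n)"
    and kpos: "\<And>n. n \<ge> 1 \<Longrightarrow> 0 < k n" and kle: "\<And>n. k n \<le> n"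
    and ksmall: "(\<lambda>n. real (k n)) \<in> o(\<lambda>n. (real n ^ 2 / moment n (d n) 2) powr (2/3))"
  shows "\<exists>E. E \<in> O(\<lambda>n. real (k n) powr (3/2) * moment n (d n) 2 / real n ^ 2) \<and>
    (\<forall>\<^sub>F n in at_top.
      (let alpha = real (k n) / real n;
           lam = (\<Sum>j=1..n. alpha * real (d n j) / (alpha * real (d n j) + 1))
       in gfun n (d n) (k n) =
          (1 - alpha) ^ (n - k n) * (\<Prod>j=1..n. alpha * real (d n j) + 1)
          * exp (real (k n) - lam) * (lam / real (k n)) ^ (k n) * (1 + E n)))"
proof -
  define Bf where "Bf n = real (k n) powr (3/2) * moment n (d n) 2 / real n ^ 2" for n
  define P where "P n \<epsilon> \<longleftrightarrow> \<bar>\<epsilon>\<bar> \<le> 60000 * Bf n \<and>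
     gfun n (d n) (k n) = (1 - real (k n) / real n) ^ (n - k n) * (\<Prod>j=1..n. real (k n) / real n * real (d n j) + 1)
       * exp (real (k n) - (\<Sum>j=1..n. real (k n) / real n * real (d n j) / (real (k n) / real n * real (d n j) + 1)))
       * ((\<Sum>j=1..n. real (k n) / real n * real (d n j) / (real (k n) / real n * real (d n j) + 1)) / real (k n)) ^ (k n) * (1 + \<epsilon>)" for n \<epsilon>
  define E where "E n = (SOME \<epsilon>. P n \<epsilon>)" for n
  have ev1: "\<forall>\<^sub>F n in at_top. norm (real (k n)) \<le> (1/30000) * norm ((real n ^ 2 / moment n (d n) 2) powr (2/3))"
    by (rule landau_o.smallD[OF ksmall]) simp
  have evP: "\<forall>\<^sub>F n in at_top. P n (E n)"
    using ev1 eventually_ge_at_top[of "1::nat"]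
  proof eventually_elim
    case (elim n)
    have n1: "real n \<ge> 1" using elim(2) by simp
    have k1: "1 \<le> k n" using kpos[OF elim(2)] by simp
    have m: "moment n (d n) 2 \<ge> real n" by (rule moment_ge[OF deg])
    have Bb: "Bf n \<le> 1/30000" unfolding Bf_def
      by (rule small_bound[OF n1 m _ _ _ elim(1)[unfolded real_norm_def]]) auto
    have Bf_eq: "Bf n = real (k n) * sqrt (real (k n)) * moment n (d n) 2 / real n ^ 2"
      unfolding Bf_def by (simp add: powr_32)
    have "\<exists>\<epsilon>. P n \<epsilon>"
      using per_n[OF deg[of n, unfolded is_degree_seq_def] k1 kle[of n] Bb[unfolded Bf_eq]]
      unfolding P_def Bf_eq by simp
    thus "P n (E n)" unfolding E_def by (rule someI_ex)
  qed
  show ?thesis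
  proof (intro exI conjI)
    show "E \<in> O(\<lambda>n. real (k n) powr (3/2) * moment n (d n) 2 / real n ^ 2)"
    proof (rule landau_o.bigI[of 60000])
      show "\<forall>\<^sub>F n in at_top. norm (E n) \<le> 60000 * norm (real (k n) powr (3/2) * moment n (d n) 2 / real n ^ 2)"
        using evP
      proof eventually_elim
        case (elim n)
        have "\<bar>E n\<bar> \<le> 60000 * Bf n" using elim unfolding P_def by blast
        also have "\<dots> \<le> 60000 * \<bar>Bf n\<bar>" by simp
        finally show ?case unfolding Bf_def by simp
      qed
    qed simp
    show "\<forall>\<^sub>F n in at_top.
      (let alpha = real (k n) / real n;
           lam = (\<Sum>j=1..n. alpha * real (d n j) / (alpha * real (d n j) + 1))
       in gfun n (d n) (k n) =
          (1 - alpha) ^ (n - k n) * (\<Prod>j=1..n. alpha * real (d n j) + 1)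
          * exp (real (k n) - lam) * (lam / real (k n)) ^ (k n) * (1 + E n))"
      using evP by eventually_elim (simp add: P_def Let_def)
  qed
qed

end
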